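(* Let $A\in\mathbb{R}^{m\times n}$, $a\in\mathbb{R}^{1\times n}$, $c_A\in\mathbb{R}^m$, $c_a\in\mathbb{R}$, and let \[ P=\{x\in\mathbb{R}^n : Ax=c_A,\ ax=c_a,\ x\ge 0\},\qquad P_{\bar A}=\{(x,s)\in\mathbb{R}^n\times\mathbb{R} : Ax=c_A,\ ax+s=c_a,\ x\ge 0,\ s\ge 0\}. \] Then $d(P_{\bar A})\le d(A)+d(P)+2$.
   Context: The combinatorial diameter $d(P)$ of a polyhedron $P$ is the maximum, over all pairs of vertices, of the minimum number of edges in an edge walk in $P$ between them. For a matrix $M\in\mathbb{R}^{m\times n}$, $d(M):=\max\{d(\{x: Mx=r,\ x\ge 0\}) : r\in\mathbb{R}^m\}$. *)

theory Defs
  imports "HOL-Analysis.Analysis" "HOL-Library.Extended_Nat"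
begin

definition poly_vertices :: "'a::real_vector set \<Rightarrow> 'a set" where
  "poly_vertices P = {v. v extreme_point_of P}"

definition poly_adj :: "'a::real_vector set \<Rightarrow> 'a \<Rightarrow> 'a \<Rightarrow> bool" where
  "poly_adj P u v \<longleftrightarrow> u \<in> poly_vertices P \<and> v \<in> poly_vertices P \<and> u \<noteq> v
      \<and> closed_segment u v face_of P"

text \<open>Minimum number of edges in an edge walk from u to v (infinite if none).\<close>
definition walk_dist :: "'a::real_vector set \<Rightarrow> 'a \<Rightarrow> 'a \<Rightarrow> enat" where
  "walk_dist P u v = (INF k \<in> {k. \<exists>p. length p = Suc k \<and> hd p = u \<and> last p = v
        \<and> (\<forall>i<k. poly_adj P (p ! i) (p ! Suc i))}. enat k)"

text \<open>Combinatorial diameter (0 if there are no vertices).\<close>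
definition comb_diam :: "'a::real_vector set \<Rightarrow> enat" where
  "comb_diam P = (SUP uv \<in> poly_vertices P \<times> poly_vertices P. walk_dist P (fst uv) (snd uv))"

definition mat_diam :: "real^'n^'m \<Rightarrow> enat" where
  "mat_diam M = (SUP r \<in> (UNIV :: (real^'m) set).
      comb_diam {x :: real^'n. M *v x = r \<and> (\<forall>i. 0 \<le> x $ i)})"

end

theory Submission
  imports Defs
begin

inductive walk :: "'a::real_vector set \<Rightarrow> nat \<Rightarrow> 'a \<Rightarrow> 'a \<Rightarrow> bool" for S where
  w0: "walk S 0 u u"
| wS: "poly_adj S u v \<Longrightarrow> walk S k v w \<Longrightarrow> walk S (Suc k) u w"

lemma walk_list:
  assumes "walk S k u v"
  shows "\<exists>p. length p = Suc k \<and> hd p = u \<and> last p = v \<and> (\<forall>i<k. poly_adj S (p ! i) (p ! Suc i))"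
  using assms
proof (induction rule: walk.induct)
  case (w0 u)
  then show ?case by (intro exI[of _ "[u]"]) auto
next
  case (wS u v k w)
  then obtain p where p: "length p = Suc k" "hd p = v" "last p = w"
    "\<forall>i<k. poly_adj S (p ! i) (p ! Suc i)" by blast
  have "p \<noteq> []" using p(1) by auto
  then have h: "p ! 0 = v" using p(2) by (simp add: hd_conv_nth)
  show ?case
  proof (intro exI[of _ "u # p"] conjI allI impI)
    fix i assume "i < Suc k"
    then show "poly_adj S ((u # p) ! i) ((u # p) ! Suc i)"
      using wS.hyps(1) h p(4) by (cases i) auto
  qed (use p \<open>p \<noteq> []\<close> in auto)
qed

lemma walk_dist_le: "walk S k u v \<Longrightarrow> walk_dist S u v \<le> enat k"
  unfolding walk_dist_def using walk_list by (intro INF_lower) auto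

lemma list_walk:
  "length p = Suc k \<Longrightarrow> (\<forall>i<k. poly_adj S (p ! i) (p ! Suc i)) \<Longrightarrow> walk S k (hd p) (last p)"
proof (induction k arbitrary: p)
  case 0
  then obtain x where "p = [x]" by (cases p) auto
  then show ?case by (auto intro: walk.w0)
next
  case (Suc k)
  then obtain x p' where p: "p = x # p'" by (cases p) auto
  with Suc.prems have l: "length p' = Suc k" by auto
  have "\<forall>i<k. poly_adj S (p' ! i) (p' ! Suc i)"
    using Suc.prems(2) p by auto
  with Suc.IH l have "walk S k (hd p') (last p')" by blast
  moreover have "p' \<noteq> []" using l by auto
  moreover have "poly_adj S x (hd p')" using Suc.prems(2) p \<open>p' \<noteq> []\<close>
    by (auto simp: hd_conv_nth)
  ultimately show ?case using p by (auto intro: walk.wS)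
qed

lemma walk_of_dist:
  assumes "walk_dist S u v \<le> enat n"
  shows "\<exists>k\<le>n. walk S k u v"
proof (rule ccontr)
  let ?K = "{k. \<exists>p. length p = Suc k \<and> hd p = u \<and> last p = v
        \<and> (\<forall>i<k. poly_adj S (p ! i) (p ! Suc i))}"
  assume nt: "\<not> ?thesis"
  have nk: "n < k" if "k \<in> ?K" for k
  proof -
    from that obtain p where "length p = Suc k" "hd p = u" "last p = v"
        "\<forall>i<k. poly_adj S (p ! i) (p ! Suc i)" by blast
    then have "walk S k u v" using list_walk[of p k S] by simp
    with nt show ?thesis by (meson not_le)
  qed
  have "enat (Suc n) \<le> enat k" if "k \<in> ?K" for k using nk[OF that] by simp
  then have "enat (Suc n) \<le> walk_dist S u v"
    unfolding walk_dist_def by (rule INF_greatest)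
  with assms have "enat (Suc n) \<le> enat n" by (rule order_trans[rotated])
  then show False by simp
qed

lemma walk_trans: "walk S k u v \<Longrightarrow> walk S l v w \<Longrightarrow> walk S (k + l) u w"
  by (induction rule: walk.induct) (auto intro: walk.intros)

lemma walk_one: "poly_adj S u v \<Longrightarrow> walk S 1 u v"
  using walk.wS[OF _ walk.w0] by simp

lemma poly_adj_sym: "poly_adj S u v \<Longrightarrow> poly_adj S v u"
  unfolding poly_adj_def by (auto simp: closed_segment_commute)

lemma walk_sym: "walk S k u v \<Longrightarrow> walk S k v u"
proof (induction rule: walk.induct)
  case (w0 u)
  then show ?case by (rule walk.w0)
next
  case (wS u v k w)
  have "walk S (k + 1) w u" using walk_trans[OF wS.IH walk_one[OF poly_adj_sym[OF wS.hyps(1)]]] .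
  then show ?case by simp
qed

lemma walk_mono: "walk S k u v \<Longrightarrow> (\<And>x y. poly_adj S x y \<Longrightarrow> poly_adj T x y) \<Longrightarrow> walk T k u v"
  by (induction rule: walk.induct) (auto intro: walk.intros)

lemma face_of_affine_image:
  assumes "linear h" "inj h"
  shows "((\<lambda>x. c + h x) ` T face_of (\<lambda>x. c + h x) ` S) \<longleftrightarrow> T face_of S"
proof -
  have e: "\<And>X. (\<lambda>x. c + h x) ` X = (+) c ` (h ` X)" by auto
  show ?thesis unfolding e face_of_translation_eq face_of_linear_image[OF assms] ..
qed

lemma comb_diam_affine_image:
  assumes "linear h" "inj h"
  shows "comb_diam ((\<lambda>x. c + h x) ` S) \<le> comb_diam S"
proof -
  define g where "g = (\<lambda>x. c + h x)"
  have ing: "inj g" using assms(2) unfolding g_def inj_def by auto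
  have ext: "g v extreme_point_of g ` S \<longleftrightarrow> v extreme_point_of S" for v
    using face_of_affine_image[OF assms, of c "{v}" S] by (simp add: g_def face_of_singleton)
  have seg: "closed_segment (g u) (g v) = g ` closed_segment u v" for u v
  proof -
    have "closed_segment (g u) (g v) = (\<lambda>x. c + x) ` closed_segment (h u) (h v)"
      unfolding g_def by (rule closed_segment_translation)
    also have "\<dots> = g ` closed_segment u v"
      unfolding closed_segment_linear_image[OF assms(1)] g_def by auto
    finally show ?thesis .
  qed
  have vert: "poly_vertices (g ` S) = g ` poly_vertices S"
  proof
    show "poly_vertices (g ` S) \<subseteq> g ` poly_vertices S"
    proof
      fix y assume "y \<in> poly_vertices (g ` S)"
      then have y: "y extreme_point_of g ` S" by (simp add: poly_vertices_def)
      then have "y \<in> g ` S" by (simp add: extreme_point_of_def)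
      then obtain v where "y = g v" by auto
      with y ext show "y \<in> g ` poly_vertices S" by (auto simp: poly_vertices_def)
    qed
  qed (auto simp: poly_vertices_def ext)
  have adj: "poly_adj (g ` S) (g u) (g v)" if "poly_adj S u v" for u v
    using that unfolding poly_adj_def seg vert
    by (auto simp: ing inj_eq assms(2) g_def face_of_affine_image[OF assms])
  have wk: "walk (g ` S) k (g u) (g v)" if "walk S k u v" for k u v
    using that by (induction rule: walk.induct) (auto intro: walk.intros adj)
  have wd: "walk_dist (g ` S) (g u) (g v) \<le> walk_dist S u v" for u v
  proof -
    have "walk_dist (g ` S) (g u) (g v) \<le> enat k" if "k \<in> {k. \<exists>p. length p = Suc k \<and> hd p = u \<and> last p = v
        \<and> (\<forall>i<k. poly_adj S (p ! i) (p ! Suc i))}" for k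
      using that list_walk[of _ k S] wk walk_dist_le by fastforce
    then show ?thesis unfolding walk_dist_def[of S] by (intro INF_greatest) auto
  qed
  show ?thesis
    unfolding comb_diam_def g_def[symmetric] vert
  proof (intro SUP_least)
    fix uv assume "uv \<in> g ` poly_vertices S \<times> g ` poly_vertices S"
    then obtain u v where uv: "uv = (g u, g v)" "u \<in> poly_vertices S" "v \<in> poly_vertices S" by auto
    have "walk_dist S u v \<le> (SUP uv\<in>poly_vertices S \<times> poly_vertices S. walk_dist S (fst uv) (snd uv))"
      using uv by (intro SUP_upper2[of "(u,v)"]) auto
    then show "walk_dist (g ` S) (fst uv) (snd uv) \<le> (SUP uv\<in>poly_vertices S \<times> poly_vertices S. walk_dist S (fst uv) (snd uv))"
      using wd[of u v] uv by simp
  qed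
qed


lemma ext_sub: "x extreme_point_of S \<Longrightarrow> x \<in> T \<Longrightarrow> T \<subseteq> S \<Longrightarrow> x extreme_point_of T"
  unfolding extreme_point_of_def by blast

lemma seg_zero:
  fixes p q x :: "real^'n"
  assumes "\<forall>i. 0 \<le> p$i" "\<forall>i. 0 \<le> q$i" "x = (1-u) *\<^sub>R p + u *\<^sub>R q" "0 < u" "u < 1" "x$i = 0"
  shows "p$i = 0 \<and> q$i = 0"
proof -
  have 1: "(1-u) * p$i \<ge> 0" "u * q$i \<ge> 0" using assms by auto
  have "(1-u) * p$i + u * q$i = 0" using assms(3,6) by simp
  then have "(1-u) * p$i = 0" "u * q$i = 0" using 1 by linarith+
  then show ?thesis using assms(4,5) by simp
qed

lemma mv_neg: "(M::real^'n^'m) *v (- x) = - (M *v x)"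
  by (metis diff_0 matrix_vector_mult_diff_distrib matrix_vector_mult_0_right)

locale LP =
  fixes A :: "real^'n^'m" and a :: "real^'n" and cA :: "real^'m" and ca :: real
begin

definition "PA = {x. A *v x = cA \<and> (\<forall>i. 0 \<le> x$i)}"
definition "Q = PA \<inter> {x. a \<bullet> x \<le> ca}"
definition "P = {x. A *v x = cA \<and> a \<bullet> x = ca \<and> (\<forall>i. 0 \<le> x$i)}"

lemma convex_PA: "convex PA"
proof (rule convexI)
  fix x y :: "real^'n" and u v :: real
  assume x: "x \<in> PA" and y: "y \<in> PA" and uv: "0 \<le> u" "0 \<le> v" "u + v = 1"
  have "A *v (u *\<^sub>R x + v *\<^sub>R y) = (u + v) *\<^sub>R cA"
    using x y by (simp add: PA_def matrix_vector_right_distrib matrix_vector_mult_scaleR scaleR_left_distrib)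
  moreover have "0 \<le> (u *\<^sub>R x + v *\<^sub>R y) $ i" for i using x y uv by (simp add: PA_def)
  ultimately show "u *\<^sub>R x + v *\<^sub>R y \<in> PA" using uv by (simp add: PA_def)
qed

lemma convex_Q: "convex Q"
  unfolding Q_def by (intro convex_Int convex_PA convex_halfspace_le)

lemma Q_sub: "Q \<subseteq> PA" unfolding Q_def by auto

lemma P_eq: "P = Q \<inter> {x. a \<bullet> x = ca}"
  unfolding P_def Q_def PA_def by auto

lemma P_face: "P face_of Q"
  unfolding P_eq by (rule face_of_Int_supporting_hyperplane_le[OF convex_Q]) (auto simp: Q_def)

lemma vP_Q: "x \<in> poly_vertices P \<Longrightarrow> x \<in> poly_vertices Q \<and> a \<bullet> x = ca"
  using extreme_point_of_face[OF P_face] unfolding poly_vertices_def P_eq by auto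

lemma Q_P: "x \<in> poly_vertices Q \<Longrightarrow> a \<bullet> x = ca \<Longrightarrow> x \<in> poly_vertices P"
  unfolding poly_vertices_def P_eq
  by (auto intro: ext_sub simp: extreme_point_of_def)

lemma PA_Q: "x \<in> poly_vertices PA \<Longrightarrow> a \<bullet> x \<le> ca \<Longrightarrow> x \<in> poly_vertices Q"
  unfolding poly_vertices_def Q_def
  by (auto intro: ext_sub simp: extreme_point_of_def)

lemma Q_PA:
  assumes "x \<in> poly_vertices Q" "a \<bullet> x < ca"
  shows "x \<in> poly_vertices PA"
proof -
  have xQ: "x extreme_point_of Q" using assms by (simp add: poly_vertices_def)
  have xPA: "x \<in> PA" using xQ by (auto simp: extreme_point_of_def Q_def)
  have False if y: "y \<in> PA" and z: "z \<in> PA" and xs: "x \<in> open_segment y z" for y z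
  proof -
    obtain u where yz: "y \<noteq> z" and u: "0 < u" "u < 1" and xu: "x = (1-u) *\<^sub>R y + u *\<^sub>R z"
      using xs by (auto simp: in_segment)
    define e where "e = ca - a \<bullet> x"
    define M where "M = \<bar>a \<bullet> y - a \<bullet> x\<bar> + \<bar>a \<bullet> z - a \<bullet> x\<bar> + e"
    define \<epsilon> where "\<epsilon> = e / M"
    have e0: "e > 0" using assms(2) by (simp add: e_def)
    have M0: "M \<ge> e" "M > 0" using e0 by (auto simp: M_def)
    have eps0: "\<epsilon> > 0" "\<epsilon> \<le> 1" using e0 M0 by (auto simp: \<epsilon>_def field_simps)
    have epsb: "\<epsilon> * \<bar>a \<bullet> w - a \<bullet> x\<bar> \<le> e" if "\<bar>a \<bullet> w - a \<bullet> x\<bar> \<le> M" for w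
    proof -
      have "e * \<bar>a \<bullet> w - a \<bullet> x\<bar> \<le> e * M" using that e0 by (intro mult_left_mono) auto
      then show ?thesis using M0 by (simp add: \<epsilon>_def field_simps)
    qed
    have by': "\<epsilon> * \<bar>a \<bullet> y - a \<bullet> x\<bar> \<le> e" "\<epsilon> * \<bar>a \<bullet> z - a \<bullet> x\<bar> \<le> e"
      by (rule epsb, simp add: M_def e0 less_imp_le)+
    define y' where "y' = (1 - \<epsilon>) *\<^sub>R x + \<epsilon> *\<^sub>R y"
    define z' where "z' = (1 - \<epsilon>) *\<^sub>R x + \<epsilon> *\<^sub>R z"
    have inQ: "(1 - \<epsilon>) *\<^sub>R x + \<epsilon> *\<^sub>R w \<in> Q" if "w \<in> PA" "\<epsilon> * \<bar>a \<bullet> w - a \<bullet> x\<bar> \<le> e" for w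
    proof -
      have "(1 - \<epsilon>) *\<^sub>R x + \<epsilon> *\<^sub>R w \<in> PA"
        using convexD[OF convex_PA xPA that(1)] eps0 by simp
      moreover have "a \<bullet> ((1 - \<epsilon>) *\<^sub>R x + \<epsilon> *\<^sub>R w) = a \<bullet> x + \<epsilon> * (a \<bullet> w - a \<bullet> x)"
        by (simp add: inner_add_right algebra_simps)
      moreover have "\<epsilon> * (a \<bullet> w - a \<bullet> x) \<le> \<epsilon> * \<bar>a \<bullet> w - a \<bullet> x\<bar>"
        using eps0 by (intro mult_left_mono) auto
      ultimately show ?thesis using that(2) by (auto simp: Q_def e_def)
    qed
    have y'Q: "y' \<in> Q" unfolding y'_def using inQ y by'(1) .
    have z'Q: "z' \<in> Q" unfolding z'_def using inQ z by'(2) .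
    have "(1-u) *\<^sub>R y' + u *\<^sub>R z' = (1 - \<epsilon>) *\<^sub>R x + \<epsilon> *\<^sub>R ((1-u) *\<^sub>R y + u *\<^sub>R z)"
      by (simp add: y'_def z'_def algebra_simps)
    also have "\<dots> = x" using xu[symmetric] by (simp add: algebra_simps)
    finally have x': "x = (1-u) *\<^sub>R y' + u *\<^sub>R z'" by simp
    have "y' - z' = \<epsilon> *\<^sub>R (y - z)" by (simp add: y'_def z'_def algebra_simps)
    then have "y' \<noteq> z'" using yz eps0 by auto
    then have "x \<in> open_segment y' z'" using x' u by (auto simp: in_segment)
    then show False using xQ y'Q z'Q by (auto simp: extreme_point_of_def)
  qed
  then show ?thesis using xPA by (auto simp: poly_vertices_def extreme_point_of_def)
qed

lemma adjP: "poly_adj P x y \<Longrightarrow> poly_adj Q x y"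
  unfolding poly_adj_def using vP_Q face_of_trans[OF _ P_face] by blast

lemma adjPA:
  assumes "poly_adj PA x y" "a \<bullet> x \<le> ca" "a \<bullet> y \<le> ca"
  shows "poly_adj Q x y"
proof -
  have f: "closed_segment x y face_of PA" using assms(1) by (simp add: poly_adj_def)
  have "closed_segment x y \<subseteq> {z. a \<bullet> z \<le> ca}"
    using assms(2,3) by (intro closed_segment_subset convex_halfspace_le) auto
  then have e: "closed_segment x y = closed_segment x y \<inter> {z. a \<bullet> z \<le> ca}" by auto
  have "closed_segment x y face_of Q"
    unfolding Q_def by (subst e, rule face_of_Int_Int[OF f face_of_refl[OF convex_halfspace_le]])
  then show ?thesis using assms PA_Q by (auto simp: poly_adj_def)
qed

lemma cross:
  assumes adj: "poly_adj PA x y" and ax: "a \<bullet> x < ca" and ay: "ca < a \<bullet> y"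
  shows "\<exists>q \<in> poly_vertices P. poly_adj Q x q"
proof -
  have sf: "closed_segment x y face_of PA" and xv: "x \<in> poly_vertices PA"
    using adj by (auto simp: poly_adj_def)
  define \<theta> where "\<theta> = (ca - a \<bullet> x) / (a \<bullet> y - a \<bullet> x)"
  have th: "0 < \<theta>" "\<theta> < 1" using ax ay by (auto simp: \<theta>_def field_simps)
  define q where "q = (1 - \<theta>) *\<^sub>R x + \<theta> *\<^sub>R y"
  have aq: "a \<bullet> q = ca"
  proof -
    have "a \<bullet> q = a \<bullet> x + \<theta> * (a \<bullet> y - a \<bullet> x)" by (simp add: q_def inner_add_right algebra_simps)
    also have "\<dots> = ca" using ax ay by (simp add: \<theta>_def)
    finally show ?thesis .
  qed
  have qseg: "q \<in> closed_segment x y" using th by (auto simp: in_segment q_def intro!: exI[of _ \<theta>])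
  have qPA: "q \<in> PA" using qseg face_of_imp_subset[OF sf] by auto
  have segEq: "closed_segment x y \<inter> {z. a \<bullet> z \<le> ca} = closed_segment x q"
  proof
    show "closed_segment x q \<subseteq> closed_segment x y \<inter> {z. a \<bullet> z \<le> ca}"
      using qseg aq ax
      by (intro Int_greatest closed_segment_subset convex_halfspace_le convex_closed_segment) auto
  next
    show "closed_segment x y \<inter> {z. a \<bullet> z \<le> ca} \<subseteq> closed_segment x q"
    proof
      fix p assume p: "p \<in> closed_segment x y \<inter> {z. a \<bullet> z \<le> ca}"
      then have "p \<in> closed_segment x q \<or> p \<in> closed_segment q y"
        using Un_closed_segment[OF qseg] by auto
      then show "p \<in> closed_segment x q"
      proof
        assume "p \<in> closed_segment q y"
        then obtain \<mu> where mu: "0 \<le> \<mu>" "\<mu> \<le> 1" "p = (1 - \<mu>) *\<^sub>R q + \<mu> *\<^sub>R y"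
          by (auto simp: in_segment)
        have "a \<bullet> p = ca + \<mu> * (a \<bullet> y - ca)"
          using aq by (simp add: mu(3) inner_add_right algebra_simps)
        then have "\<mu> * (a \<bullet> y - ca) \<le> 0" using p by auto
        then have "\<mu> = 0" using mu ay by (simp add: mult_le_0_iff)
        then show ?thesis using mu by simp
      qed
    qed
  qed
  have face: "closed_segment x q face_of Q"
    unfolding Q_def segEq[symmetric] by (rule face_of_Int_Int[OF sf face_of_refl[OF convex_halfspace_le]])
  have qext: "q extreme_point_of Q"
    using extreme_point_of_face[OF face] extreme_point_of_segment by auto
  have "q \<in> P" using qext aq by (auto simp: P_eq extreme_point_of_def)
  then have qP: "q \<in> poly_vertices P"
    using qext P_eq by (auto simp: poly_vertices_def intro: ext_sub)
  have "x \<noteq> q" using ax aq by auto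
  moreover have "x \<in> poly_vertices Q" using PA_Q xv ax by auto
  moreover have "q \<in> poly_vertices Q" using qext by (simp add: poly_vertices_def)
  ultimately show ?thesis using qP face by (auto simp: poly_adj_def)
qed

lemma step_out:
  assumes adj: "poly_adj PA x z" and ax: "a \<bullet> x < ca" and az: "ca \<le> a \<bullet> z"
  shows "\<exists>q \<in> poly_vertices P. poly_adj Q x q"
proof (cases "a \<bullet> z = ca")
  case True
  have "z \<in> poly_vertices PA" using adj by (simp add: poly_adj_def)
  then have "z \<in> poly_vertices Q" using PA_Q True by auto
  then have "z \<in> poly_vertices P" using Q_P True by auto
  moreover have "poly_adj Q x z" using adjPA[OF adj] ax True by auto
  ultimately show ?thesis by blast
next
  case False
  then show ?thesis using cross[OF adj ax] az by auto
qed

lemma walkN: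
  "walk PA k y z \<Longrightarrow> a \<bullet> y < ca \<Longrightarrow> ca \<le> a \<bullet> z \<Longrightarrow>
     \<exists>q k'. q \<in> poly_vertices P \<and> k' \<le> k \<and> walk Q k' y q"
proof (induction rule: walk.induct)
  case (w0 u)
  then show ?case by simp
next
  case (wS u v k w)
  show ?case
  proof (cases "a \<bullet> v < ca")
    case True
    from wS.IH[OF True wS.prems(2)] obtain q k' where
      q: "q \<in> poly_vertices P" "k' \<le> k" "walk Q k' v q" by blast
    have "poly_adj Q u v" using adjPA[OF wS.hyps(1)] wS.prems True by auto
    then have "walk Q (Suc k') u q" using q(3) by (rule walk.wS)
    then show ?thesis using q by (intro exI[of _ q] exI[of _ "Suc k'"]) auto
  next
    case False
    then obtain q where "q \<in> poly_vertices P" "poly_adj Q u q"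
      using step_out[OF wS.hyps(1) wS.prems(1)] by auto
    then show ?thesis using walk_one by (intro exI[of _ q] exI[of _ 1]) auto
  qed
qed

lemma walkM:
  "walk PA k x y \<Longrightarrow> a \<bullet> x < ca \<Longrightarrow> a \<bullet> y < ca \<Longrightarrow>
     walk Q k x y \<or> (\<exists>q1 q2 k1 k2. q1 \<in> poly_vertices P \<and> q2 \<in> poly_vertices P \<and>
        walk Q k1 x q1 \<and> walk Q k2 q2 y \<and> k1 + k2 \<le> k)"
proof (induction rule: walk.induct)
  case (w0 u)
  then show ?case by (simp add: walk.w0)
next
  case (wS u v k w)
  show ?case
  proof (cases "a \<bullet> v < ca")
    case True
    have adj: "poly_adj Q u v" using adjPA[OF wS.hyps(1)] wS.prems True by auto
    from wS.IH[OF True wS.prems(2)] show ?thesis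
    proof
      assume "walk Q k v w"
      then show ?thesis using adj walk.wS by blast
    next
      assume "\<exists>q1 q2 k1 k2. q1 \<in> poly_vertices P \<and> q2 \<in> poly_vertices P \<and>
        walk Q k1 v q1 \<and> walk Q k2 q2 w \<and> k1 + k2 \<le> k"
      then obtain q1 q2 k1 k2 where h: "q1 \<in> poly_vertices P" "q2 \<in> poly_vertices P"
        "walk Q k1 v q1" "walk Q k2 q2 w" "k1 + k2 \<le> k" by blast
      have "walk Q (Suc k1) u q1" using adj h(3) by (rule walk.wS)
      then show ?thesis using h by (intro disjI2 exI[of _ q1] exI[of _ q2] exI[of _ "Suc k1"] exI[of _ k2]) auto
    qed
  next
    case False
    then obtain q1 where q1: "q1 \<in> poly_vertices P" "poly_adj Q u q1"
      using step_out[OF wS.hyps(1) wS.prems(1)] by auto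
    obtain q2 k' where q2: "q2 \<in> poly_vertices P" "k' \<le> k" "walk Q k' w q2"
      using walkN[OF walk_sym[OF wS.hyps(2)] wS.prems(2)] False by auto
    show ?thesis using q1 q2 walk_one[OF q1(2)] walk_sym[OF q2(3)]
      by (intro disjI2 exI[of _ q1] exI[of _ q2] exI[of _ 1] exI[of _ k']) auto
  qed
qed

end

context LP
begin

lemma G:
  assumes vQ: "v extreme_point_of Q" and av: "a \<bullet> v = ca" and nPA: "\<not> v extreme_point_of PA"
  shows "\<exists>w. w extreme_point_of PA \<and> (ca < a \<bullet> w \<or> (a \<bullet> w < ca \<and> poly_adj Q w v))"
proof -
  have vQ': "v \<in> Q" using vQ by (simp add: extreme_point_of_def)
  then have vPA: "v \<in> PA" using Q_sub by auto
  have Av: "A *v v = cA" and vnn: "\<forall>i. 0 \<le> v$i" using vPA by (auto simp: PA_def)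
  obtain y z where y: "y \<in> PA" and z: "z \<in> PA" and vs: "v \<in> open_segment y z"
    using nPA vPA by (auto simp: extreme_point_of_def)
  obtain u where yz: "y \<noteq> z" and u: "0 < u" "u < 1" and vu: "v = (1-u) *\<^sub>R y + u *\<^sub>R z"
    using vs by (auto simp: in_segment)
  define d0 where "d0 = z - y"
  have d0ne: "d0 \<noteq> 0" using yz by (simp add: d0_def)
  have Ad0: "A *v d0 = 0" using y z by (simp add: d0_def PA_def matrix_vector_mult_diff_distrib)
  have supp0: "\<forall>i. v$i = 0 \<longrightarrow> d0$i = 0"
  proof (intro allI impI)
    fix i assume "v$i = 0"
    then have "y$i = 0 \<and> z$i = 0" using seg_zero[of y z v u i] y z vu u by (auto simp: PA_def)
    then show "d0$i = 0" by (simp add: d0_def)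
  qed
  have ad0: "a \<bullet> d0 \<noteq> 0"
  proof
    assume "a \<bullet> d0 = 0"
    then have e: "a \<bullet> y = a \<bullet> z" by (simp add: d0_def inner_diff_right)
    have "a \<bullet> v = (1-u) * (a \<bullet> y) + u * (a \<bullet> z)" by (simp add: vu inner_add_right)
    also have "\<dots> = a \<bullet> y" using e by (simp add: algebra_simps)
    finally have "a \<bullet> y = ca" "a \<bullet> z = ca" using av e by auto
    then have "y \<in> Q" "z \<in> Q" using y z by (simp_all add: Q_def)
    then show False using vQ vs by (auto simp: extreme_point_of_def)
  qed
  have K: "f = 0" if Af: "A *v f = 0" and sf: "\<forall>i. v$i = 0 \<longrightarrow> f$i = 0" and af: "a \<bullet> f = 0" for f
  proof (rule ccontr)
    assume fne: "f \<noteq> 0"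
    define S where "S = {i. v$i \<noteq> 0}"
    obtain i0 where i0: "f$i0 \<noteq> 0" using fne by (auto simp: vec_eq_iff)
    then have "i0 \<in> S" using sf by (auto simp: S_def)
    then have Sne: "S \<noteq> {}" by auto
    have finS: "finite S" by simp
    have vpos: "v$i > 0" if "i \<in> S" for i using that vnn by (auto simp: S_def less_le)
    define \<epsilon> where "\<epsilon> = Min ((\<lambda>i. v$i / (\<bar>f$i\<bar> + 1)) ` S)"
    have eps0: "\<epsilon> > 0" unfolding \<epsilon>_def using finS Sne vpos
      by (subst Min_gr_iff) (auto intro!: divide_pos_pos)
    have epsb: "\<epsilon> * \<bar>f$i\<bar> \<le> v$i" for i
    proof (cases "i \<in> S")
      case True
      have "\<epsilon> \<le> v$i / (\<bar>f$i\<bar> + 1)" unfolding \<epsilon>_def using finS True by (intro Min_le) auto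
      then have "\<epsilon> * (\<bar>f$i\<bar> + 1) \<le> v$i" by (simp add: pos_le_divide_eq add_pos_nonneg)
      then show ?thesis using eps0 by (simp add: algebra_simps)
    next
      case False
      then show ?thesis using sf vnn by (auto simp: S_def)
    qed
    have inQ: "v + s *\<^sub>R f \<in> Q" if "\<bar>s\<bar> = \<epsilon>" for s
    proof -
      have "A *v (v + s *\<^sub>R f) = cA" using Av Af by (simp add: matrix_vector_right_distrib matrix_vector_mult_scaleR)
      moreover have "0 \<le> (v + s *\<^sub>R f) $ i" for i
      proof -
        have "\<bar>s * f$i\<bar> \<le> v$i" using epsb[of i] that by (simp add: abs_mult)
        then show ?thesis by simp
      qed
      moreover have "a \<bullet> (v + s *\<^sub>R f) = ca" using av af by (simp add: inner_add_right)
      ultimately show ?thesis by (simp add: Q_def PA_def)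
    qed
    have p1: "v + (-\<epsilon>) *\<^sub>R f \<in> Q" using inQ[of "-\<epsilon>"] eps0 by (simp only: abs_minus_cancel abs_of_pos)
    have p2: "v + \<epsilon> *\<^sub>R f \<in> Q" using inQ[of "\<epsilon>"] eps0 by simp
    have "(v + \<epsilon> *\<^sub>R f) - (v + (-\<epsilon>) *\<^sub>R f) = (2 * \<epsilon>) *\<^sub>R f" by (simp add: vec_eq_iff algebra_simps)
    moreover have "(2 * \<epsilon>) *\<^sub>R f \<noteq> 0" using eps0 fne by simp
    ultimately have ne: "v + (-\<epsilon>) *\<^sub>R f \<noteq> v + \<epsilon> *\<^sub>R f" by auto
    have "v = (1 - 1/2) *\<^sub>R (v + (-\<epsilon>) *\<^sub>R f) + (1/2) *\<^sub>R (v + \<epsilon> *\<^sub>R f)"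
      by (simp add: vec_eq_iff algebra_simps)
    then have "v \<in> open_segment (v + (-\<epsilon>) *\<^sub>R f) (v + \<epsilon> *\<^sub>R f)"
      using ne unfolding in_segment by (intro conjI exI[of _ "1/2"]) auto
    then show False using vQ p1 p2 by (auto simp: extreme_point_of_def)
  qed
  define d where "d = (if a \<bullet> d0 < 0 then d0 else -d0)"
  have Ad: "A *v d = 0" using Ad0 by (simp add: d_def mv_neg)
  have suppd: "\<forall>i. v$i = 0 \<longrightarrow> d$i = 0" using supp0 by (simp add: d_def)
  have ad: "a \<bullet> d < 0" using ad0 by (auto simp: d_def)
  have dne: "d \<noteq> 0" using d0ne by (simp add: d_def)
  have Kd: "f = ((a \<bullet> f) / (a \<bullet> d)) *\<^sub>R d" if Af: "A *v f = 0" and sf: "\<forall>i. v$i = 0 \<longrightarrow> f$i = 0" for f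
  proof -
    have "f - ((a \<bullet> f) / (a \<bullet> d)) *\<^sub>R d = 0"
    proof (rule K)
      show "A *v (f - ((a \<bullet> f) / (a \<bullet> d)) *\<^sub>R d) = 0"
        using Af Ad by (simp add: matrix_vector_mult_diff_distrib matrix_vector_mult_scaleR)
      show "\<forall>i. v$i = 0 \<longrightarrow> (f - ((a \<bullet> f) / (a \<bullet> d)) *\<^sub>R d)$i = 0" using sf suppd by simp
      show "a \<bullet> (f - ((a \<bullet> f) / (a \<bullet> d)) *\<^sub>R d) = 0" using ad by (simp add: inner_diff_right)
    qed
    then show ?thesis by simp
  qed
  have Ext: "\<exists>t j. t > 0 \<and> e$j < 0 \<and> v$j + t * e$j = 0 \<and> v + t *\<^sub>R e \<in> PA
      \<and> (v + t *\<^sub>R e) extreme_point_of PA"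
    if Ae: "A *v e = 0" and se: "\<forall>i. v$i = 0 \<longrightarrow> e$i = 0" and en: "\<exists>i. e$i < 0"
      and Ke: "\<forall>f. A *v f = 0 \<longrightarrow> (\<forall>i. v$i = 0 \<longrightarrow> f$i = 0) \<longrightarrow> (\<exists>l. f = l *\<^sub>R e)" for e
  proof -
    define N where "N = {i. e$i < 0}"
    have finN: "finite N" by simp
    have Nne: "N \<noteq> {}" using en by (auto simp: N_def)
    have vposN: "v$i > 0" if "i \<in> N" for i using that se vnn by (force simp: N_def less_le)
    define t where "t = Min ((\<lambda>i. - v$i / e$i) ` N)"
    have t0: "t > 0" unfolding t_def using finN Nne vposN
      by (subst Min_gr_iff) (auto simp: N_def intro!: divide_pos_neg)
    have "t \<in> (\<lambda>i. - v$i / e$i) ` N" unfolding t_def by (rule Min_in) (use finN Nne in auto)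
    then obtain j where jN: "j \<in> N" and tj: "t = - v$j / e$j" by blast
    have ej: "e$j < 0" using jN by (simp add: N_def)
    have wj: "v$j + t * e$j = 0" using tj ej by (simp add: field_simps)
    have tle: "v$i + t * e$i \<ge> 0" for i
    proof (cases "i \<in> N")
      case True
      have "t \<le> - v$i / e$i" unfolding t_def using finN True by (intro Min_le) auto
      then have "t * e$i \<ge> (- v$i / e$i) * e$i" using True by (intro mult_right_mono_neg) (auto simp: N_def)
      then show ?thesis using True by (simp add: N_def)
    next
      case False
      then show ?thesis using t0 vnn by (simp add: N_def not_less)
    qed
    define w where "w = v + t *\<^sub>R e"
    have wPA: "w \<in> PA" using Av Ae tle
      by (simp add: w_def PA_def matrix_vector_right_distrib matrix_vector_mult_scaleR)
    have "w extreme_point_of PA"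
    proof -
      have False if p: "p \<in> PA" and q: "q \<in> PA" and ws: "w \<in> open_segment p q" for p q
      proof -
        obtain \<mu> where pq: "p \<noteq> q" and mu: "0 < \<mu>" "\<mu> < 1" and wm: "w = (1-\<mu>) *\<^sub>R p + \<mu> *\<^sub>R q"
          using ws by (auto simp: in_segment)
        define f where "f = q - p"
        have Af: "A *v f = 0" using p q by (simp add: f_def PA_def matrix_vector_mult_diff_distrib)
        have z: "p$i = 0 \<and> q$i = 0" if "w$i = 0" for i
          using seg_zero[of p q w \<mu> i] p q wm mu that by (auto simp: PA_def)
        have sf: "\<forall>i. v$i = 0 \<longrightarrow> f$i = 0"
        proof (intro allI impI)
          fix i assume "v$i = 0"
          then have "w$i = 0" using se by (simp add: w_def)
          then show "f$i = 0" using z by (simp add: f_def)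
        qed
        obtain l where fl: "f = l *\<^sub>R e" using Ke Af sf by blast
        have "w$j = 0" using wj by (simp add: w_def)
        then have "f$j = 0" using z by (simp add: f_def)
        then have "l = 0" using fl ej by simp
        then have "f = 0" using fl by simp
        then show False using pq by (simp add: f_def)
      qed
      then show ?thesis using wPA by (auto simp: extreme_point_of_def)
    qed
    then show ?thesis using t0 ej wj wPA unfolding w_def by blast
  qed
  show ?thesis
  proof (cases "\<exists>i. d$i < 0")
    case True
    have Ke: "\<forall>f. A *v f = 0 \<longrightarrow> (\<forall>i. v$i = 0 \<longrightarrow> f$i = 0) \<longrightarrow> (\<exists>l. f = l *\<^sub>R d)"
      using Kd by blast
    obtain t j where t0: "t > 0" and dj: "d$j < 0" and wj: "v$j + t * d$j = 0"
      and wPA: "v + t *\<^sub>R d \<in> PA" and wext: "(v + t *\<^sub>R d) extreme_point_of PA"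
      using Ext[OF Ad suppd True Ke] by blast
    define w where "w = v + t *\<^sub>R d"
    have aw: "a \<bullet> w = ca + t * (a \<bullet> d)" using av by (simp add: w_def inner_add_right)
    have awl: "a \<bullet> w < ca" using aw t0 ad by (simp add: mult_pos_neg)
    have wQ: "w \<in> Q" using wPA awl by (simp add: w_def Q_def)
    have wvQ: "w \<in> poly_vertices Q"
      using ext_sub[OF wext] wQ Q_sub by (simp add: w_def poly_vertices_def)
    have wne: "w \<noteq> v" using t0 dne by (simp add: w_def)
    have key: "p \<in> closed_segment w v"
      if p: "p \<in> Q" and q: "q \<in> Q" and x: "x \<in> closed_segment w v" and xs: "x \<in> open_segment p q" for p q x
    proof -
      obtain s where s: "0 \<le> s" "s \<le> 1" and xs': "x = (1 - s) *\<^sub>R w + s *\<^sub>R v"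
        using x by (auto simp: in_segment)
      define \<sigma> where "\<sigma> = (1 - s) * t"
      have xv: "x = v + \<sigma> *\<^sub>R d" by (simp add: xs' w_def \<sigma>_def algebra_simps)
      obtain \<mu> where mu: "0 < \<mu>" "\<mu> < 1" and xm: "x = (1-\<mu>) *\<^sub>R p + \<mu> *\<^sub>R q"
        using xs by (auto simp: in_segment)
      have pPA: "p \<in> PA" and qPA: "q \<in> PA" using p q Q_sub by auto
      have Ax: "A *v x = cA" using Av Ad by (simp add: xv matrix_vector_right_distrib matrix_vector_mult_scaleR)
      define f where "f = p - x"
      have Af: "A *v f = 0" using pPA Ax by (simp add: f_def PA_def matrix_vector_mult_diff_distrib)
      have sf: "\<forall>i. v$i = 0 \<longrightarrow> f$i = 0"
      proof (intro allI impI)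
        fix i assume vi: "v$i = 0"
        then have xi: "x$i = 0" using suppd by (simp add: xv)
        then have "p$i = 0" using seg_zero[of p q x \<mu> i] pPA qPA xm mu by (auto simp: PA_def)
        then show "f$i = 0" using xi by (simp add: f_def)
      qed
      define l where "l = (a \<bullet> f) / (a \<bullet> d)"
      have fl: "f = l *\<^sub>R d" using Kd[OF Af sf] by (simp add: l_def)
      define \<tau> where "\<tau> = \<sigma> + l"
      have pv: "p = v + \<tau> *\<^sub>R d"
      proof -
        have "p = x + f" by (simp add: f_def)
        then show ?thesis by (simp add: fl xv \<tau>_def algebra_simps)
      qed
      have "a \<bullet> p = ca + \<tau> * (a \<bullet> d)" using av by (simp add: pv inner_add_right)
      then have "\<tau> * (a \<bullet> d) \<le> 0" using p by (simp add: Q_def)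
      then have tau0: "\<tau> \<ge> 0" using ad by (simp add: mult_le_0_iff)
      have taut: "\<tau> \<le> t"
      proof (rule ccontr)
        assume "\<not> \<tau> \<le> t"
        then have "\<tau> * d$j < t * d$j" using dj by (simp add: mult_strict_right_mono_neg)
        then have "p$j < 0" using wj by (simp add: pv)
        then show False using pPA by (auto simp: PA_def not_le[symmetric])
      qed
      have "p = (1 - (1 - \<tau>/t)) *\<^sub>R w + (1 - \<tau>/t) *\<^sub>R v"
        using t0 by (simp add: pv w_def algebra_simps)
      then show ?thesis using tau0 taut t0 unfolding in_segment
        by (intro exI[of _ "1 - \<tau>/t"]) (auto simp: field_simps)
    qed
    have face: "closed_segment w v face_of Q"
      unfolding face_of_def
    proof (intro conjI ballI impI)
      show "closed_segment w v \<subseteq> Q" using wQ vQ' convex_Q by (rule closed_segment_subset)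
      show "convex (closed_segment w v)" by (rule convex_closed_segment)
      fix p q x assume "p \<in> Q" "q \<in> Q" "x \<in> closed_segment w v" "x \<in> open_segment p q"
      then show "p \<in> closed_segment w v" "q \<in> closed_segment w v"
        using key open_segment_commute by blast+
    qed
    have "poly_adj Q w v" using wvQ vQ wne face by (simp add: poly_adj_def poly_vertices_def)
    then show ?thesis using wext awl unfolding w_def by blast
  next
    case False
    define e where "e = - d"
    have Ae: "A *v e = 0" using Ad by (simp add: e_def mv_neg)
    have se: "\<forall>i. v$i = 0 \<longrightarrow> e$i = 0" using suppd by (simp add: e_def)
    obtain i1 where "d$i1 \<noteq> 0" using dne by (auto simp: vec_eq_iff)
    moreover have "\<not> d$i1 < 0" using False by blast
    ultimately have "e$i1 < 0" by (simp add: e_def)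
    then have en: "\<exists>i. e$i < 0" by blast
    have Ke: "\<forall>f. A *v f = 0 \<longrightarrow> (\<forall>i. v$i = 0 \<longrightarrow> f$i = 0) \<longrightarrow> (\<exists>l. f = l *\<^sub>R e)"
    proof (intro allI impI)
      fix f assume "A *v f = 0" "\<forall>i. v$i = 0 \<longrightarrow> f$i = 0"
      then have "f = (- ((a \<bullet> f) / (a \<bullet> d))) *\<^sub>R e" using Kd by (simp add: e_def)
      then show "\<exists>l. f = l *\<^sub>R e" by blast
    qed
    obtain t j where t0: "t > 0" and wext: "(v + t *\<^sub>R e) extreme_point_of PA"
      using Ext[OF Ae se en Ke] by blast
    have "a \<bullet> (v + t *\<^sub>R e) = ca - t * (a \<bullet> d)" using av by (simp add: e_def inner_diff_right)
    moreover have "t * (a \<bullet> d) < 0" using t0 ad by (simp add: mult_pos_neg)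
    ultimately show ?thesis using wext by (intro exI[of _ "v + t *\<^sub>R e"]) auto
  qed
qed

end

context LP
begin

lemma one_side:
  assumes HA: "\<And>x y. x \<in> poly_vertices PA \<Longrightarrow> y \<in> poly_vertices PA \<Longrightarrow> \<exists>k\<le>DA. walk PA k x y"
    and HP: "\<And>x y. x \<in> poly_vertices P \<Longrightarrow> y \<in> poly_vertices P \<Longrightarrow> \<exists>k\<le>DP. walk P k x y"
    and u: "u \<in> poly_vertices Q" "a \<bullet> u < ca" and v: "v \<in> poly_vertices Q" "a \<bullet> v = ca"
  shows "\<exists>k \<le> DA + DP + 1. walk Q k u v"
proof -
  have uPA: "u \<in> poly_vertices PA" using Q_PA u by auto
  have vP: "v \<in> poly_vertices P" using Q_P v by auto
  have HPQ: "\<exists>k\<le>DP. walk Q k x y" if "x \<in> poly_vertices P" "y \<in> poly_vertices P" for x y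
    using HP[OF that] walk_mono adjP by blast
  have viaN: "\<exists>k \<le> DA + DP + 1. walk Q k u v" if w: "w \<in> poly_vertices PA" "ca \<le> a \<bullet> w" for w
  proof -
    obtain k where k: "k \<le> DA" "walk PA k u w" using HA[OF uPA w(1)] by blast
    obtain q k' where q: "q \<in> poly_vertices P" "k' \<le> k" "walk Q k' u q"
      using walkN[OF k(2) u(2) w(2)] by blast
    obtain k2 where k2: "k2 \<le> DP" "walk Q k2 q v" using HPQ[OF q(1) vP] by blast
    show ?thesis using walk_trans[OF q(3) k2(2)] k q k2 by (intro exI[of _ "k' + k2"]) auto
  qed
  show ?thesis
  proof (cases "v \<in> poly_vertices PA")
    case True
    then show ?thesis using viaN v by auto
  next
    case False
    have "v extreme_point_of Q" "\<not> v extreme_point_of PA" using v False by (auto simp: poly_vertices_def)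
    from G[OF this(1) v(2) this(2)] obtain w where w: "w extreme_point_of PA"
      and wc: "ca < a \<bullet> w \<or> (a \<bullet> w < ca \<and> poly_adj Q w v)" by blast
    have wPA: "w \<in> poly_vertices PA" using w by (simp add: poly_vertices_def)
    show ?thesis
    proof (cases "ca < a \<bullet> w")
      case True
      then show ?thesis using viaN[OF wPA] by auto
    next
      case False
      then have aw: "a \<bullet> w < ca" and adj: "poly_adj Q w v" using wc by auto
      obtain k where k: "k \<le> DA" "walk PA k u w" using HA[OF uPA wPA] by blast
      from walkM[OF k(2) u(2) aw] show ?thesis
      proof
        assume "walk Q k u w"
        then have "walk Q (k + 1) u v" using walk_trans walk_one[OF adj] by blast
        then show ?thesis using k by (intro exI[of _ "k + 1"]) auto
      next
        assume "\<exists>q1 q2 k1 k2. q1 \<in> poly_vertices P \<and> q2 \<in> poly_vertices P \<and>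
          walk Q k1 u q1 \<and> walk Q k2 q2 w \<and> k1 + k2 \<le> k"
        then obtain q1 k1 where q1: "q1 \<in> poly_vertices P" "walk Q k1 u q1" "k1 \<le> k" by auto
        obtain k2 where k2: "k2 \<le> DP" "walk Q k2 q1 v" using HPQ[OF q1(1) vP] by blast
        show ?thesis using walk_trans[OF q1(2) k2(2)] k q1 k2 by (intro exI[of _ "k1 + k2"]) auto
      qed
    qed
  qed
qed

lemma all_pairs:
  assumes HA: "\<And>x y. x \<in> poly_vertices PA \<Longrightarrow> y \<in> poly_vertices PA \<Longrightarrow> \<exists>k\<le>DA. walk PA k x y"
    and HP: "\<And>x y. x \<in> poly_vertices P \<Longrightarrow> y \<in> poly_vertices P \<Longrightarrow> \<exists>k\<le>DP. walk P k x y"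
    and u: "u \<in> poly_vertices Q" and v: "v \<in> poly_vertices Q"
  shows "\<exists>k \<le> DA + DP + 1. walk Q k u v"
proof -
  have au: "a \<bullet> u \<le> ca" and av: "a \<bullet> v \<le> ca"
    using u v by (auto simp: poly_vertices_def extreme_point_of_def Q_def)
  show ?thesis
  proof (cases "a \<bullet> u < ca")
    case u1: True
    show ?thesis
    proof (cases "a \<bullet> v < ca")
      case True
      have "u \<in> poly_vertices PA" "v \<in> poly_vertices PA" using Q_PA u v u1 True by auto
      then obtain k where k: "k \<le> DA" "walk PA k u v" using HA by blast
      from walkM[OF k(2) u1 True] show ?thesis
      proof
        assume "walk Q k u v" then show ?thesis using k by (intro exI[of _ k]) auto
      next
        assume "\<exists>q1 q2 k1 k2. q1 \<in> poly_vertices P \<and> q2 \<in> poly_vertices P \<and>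
          walk Q k1 u q1 \<and> walk Q k2 q2 v \<and> k1 + k2 \<le> k"
        then obtain q1 q2 k1 k2 where h: "q1 \<in> poly_vertices P" "q2 \<in> poly_vertices P"
          "walk Q k1 u q1" "walk Q k2 q2 v" "k1 + k2 \<le> k" by blast
        obtain k3 where k3: "k3 \<le> DP" "walk P k3 q1 q2" using HP[OF h(1,2)] by blast
        have "walk Q k3 q1 q2" using k3(2) walk_mono adjP by blast
        then have "walk Q (k1 + k3 + k2) u v" using h walk_trans by blast
        then show ?thesis using k h k3 by (intro exI[of _ "k1 + k3 + k2"]) auto
      qed
    next
      case False
      then show ?thesis using one_side[OF HA HP u u1 v] av by auto
    qed
  next
    case u1: False
    show ?thesis
    proof (cases "a \<bullet> v < ca")
      case True
      then obtain k where "k \<le> DA + DP + 1" "walk Q k v u"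
        using one_side[OF HA HP v True u] au u1 by auto
      then show ?thesis using walk_sym by blast
    next
      case False
      have "u \<in> poly_vertices P" "v \<in> poly_vertices P" using Q_P u v u1 False au av by auto
      then obtain k where k: "k \<le> DP" "walk P k u v" using HP by blast
      then have "walk Q k u v" using walk_mono[OF _ adjP] by blast
      then show ?thesis using k by (intro exI[of _ k]) auto
    qed
  qed
qed

end

theorem theorem2:
  fixes A :: "real^'n^'m" and a :: "real^'n" and cA :: "real^'m" and ca :: real
  shows "comb_diam {(x :: real^'n, s :: real). A *v x = cA \<and> a \<bullet> x + s = ca
                     \<and> (\<forall>i. 0 \<le> x $ i) \<and> 0 \<le> s}
         \<le> mat_diam A
            + comb_diam {x :: real^'n. A *v x = cA \<and> a \<bullet> x = ca \<and> (\<forall>i. 0 \<le> x $ i)} + 2"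
proof -
  interpret L: LP A a cA ca .
  define h where "h = (\<lambda>x::real^'n. (x, - (a \<bullet> x)))"
  have lin: "linear h" unfolding h_def
    by (rule linearI) (auto simp: inner_add_right)
  have inj: "inj h" unfolding h_def inj_def by auto
  have Pbar: "{(x :: real^'n, s :: real). A *v x = cA \<and> a \<bullet> x + s = ca
                     \<and> (\<forall>i. 0 \<le> x $ i) \<and> 0 \<le> s} = (\<lambda>x. (0, ca) + h x) ` L.Q"
  proof (rule set_eqI)
    fix xs :: "(real^'n) \<times> real"
    obtain x s where xs: "xs = (x, s)" by (cases xs)
    show "xs \<in> {(x, s). A *v x = cA \<and> a \<bullet> x + s = ca \<and> (\<forall>i. 0 \<le> x $ i) \<and> 0 \<le> s} \<longleftrightarrow>
      xs \<in> (\<lambda>x. (0, ca) + h x) ` L.Q"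
      unfolding xs h_def L.Q_def L.PA_def by (auto simp: image_iff algebra_simps)
  qed
  have c1: "comb_diam {(x :: real^'n, s :: real). A *v x = cA \<and> a \<bullet> x + s = ca
                     \<and> (\<forall>i. 0 \<le> x $ i) \<and> 0 \<le> s} \<le> comb_diam L.Q"
    unfolding Pbar by (rule comb_diam_affine_image[OF lin inj])
  have Pset: "{x :: real^'n. A *v x = cA \<and> a \<bullet> x = ca \<and> (\<forall>i. 0 \<le> x $ i)} = L.P"
    by (simp add: L.P_def)
  have PAle: "comb_diam L.PA \<le> mat_diam A"
    unfolding mat_diam_def L.PA_def by (rule SUP_upper) simp
  show ?thesis
  proof (cases "mat_diam A = \<infinity> \<or> comb_diam L.P = \<infinity>")
    case True
    then show ?thesis unfolding Pset by auto
  next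
    case False
    then obtain DA DP where DA: "mat_diam A = enat DA" and DP: "comb_diam L.P = enat DP"
      by (auto simp: not_infinity_eq)
    have HA: "\<exists>k\<le>DA. walk L.PA k x y" if "x \<in> poly_vertices L.PA" "y \<in> poly_vertices L.PA" for x y
    proof -
      have "walk_dist L.PA x y \<le> comb_diam L.PA"
        unfolding comb_diam_def using that by (intro SUP_upper2[of "(x, y)"]) auto
      also have "\<dots> \<le> enat DA" using PAle DA by simp
      finally show ?thesis by (rule walk_of_dist)
    qed
    have HP: "\<exists>k\<le>DP. walk L.P k x y" if "x \<in> poly_vertices L.P" "y \<in> poly_vertices L.P" for x y
    proof -
      have "walk_dist L.P x y \<le> comb_diam L.P"
        unfolding comb_diam_def using that by (intro SUP_upper2[of "(x, y)"]) auto
      also have "\<dots> = enat DP" using DP by simp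
      finally show ?thesis by (rule walk_of_dist)
    qed
    have "comb_diam L.Q \<le> enat (DA + DP + 1)"
      unfolding comb_diam_def
    proof (rule SUP_least)
      fix uv assume "uv \<in> poly_vertices L.Q \<times> poly_vertices L.Q"
      then obtain k where k: "k \<le> DA + DP + 1" "walk L.Q k (fst uv) (snd uv)"
        using L.all_pairs[OF HA HP] by (cases uv) auto
      have "walk_dist L.Q (fst uv) (snd uv) \<le> enat k" using k(2) by (rule walk_dist_le)
      also have "\<dots> \<le> enat (DA + DP + 1)" using k(1) by simp
      finally show "walk_dist L.Q (fst uv) (snd uv) \<le> enat (DA + DP + 1)" .
    qed
    also have "\<dots> \<le> mat_diam A + comb_diam L.P + 2" using DA DP by (simp add: numeral_eq_enat)
    finally show ?thesis using c1 Pset by simp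
  qed
qed

end
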